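(* The inclusion $\mathrm{PF}(\Pi)\subseteq\mathrm{CDUS}(\Pi)$ does not hold in general: there exists a (finite) family of policies $\Pi$ such that $\mathrm{PF}(\Pi)\not\subseteq\mathrm{CDUS}(\Pi)$.
   Context: A family of policies $\Pi=\{\pi_1,\pi_2,\dots\}$ of a multi-objective decision problem with $d$ objectives is given, each $\pi$ having a random return vector $\mathbf{Z}^\pi\in\mathbb{R}^d$ with finite mean $\mathbf{V}^\pi=\mathbb{E}[\mathbf{Z}^\pi]$; the return distributions of the policies may be arbitrary (e.g. finitely supported). For $\mathbf{x},\mathbf{y}\in\mathbb{R}^d$: $\mathbf{y}\preceq_p\mathbf{x}$ iff $y_i\le x_i$ for all $i$; $\mathbf{x}\succ_p\mathbf{y}$ iff $x_i\ge y_i$ for all $i$ and $x_i>y_i$ for some $i$. CDF: $F_{\mathbf{X}}(\mathbf{x})=P(\mathbf{X}\preceq_p\mathbf{x})$; $\mathbf{X}\succeq_{\mathrm{FSD}}\mathbf{Y}$ iff $F_{\mathbf{X}}\le F_{\mathbf{Y}}$ pointwise, $\succ_{\mathrm{FSD}}$ additionally requiring strict inequality somewhere; $\mathbf{X}\succ_d\mathbf{Y}$ iff $\mathbf{X}\succeq_{\mathrm{FSD}}\mathbf{Y}$ and $X_j\succ_{\mathrm{FSD}}Y_j$ for some marginal $j$. For weights $\lambda\in\Delta^{|\Pi|}$ (probability vectors), $\sum_i\lambda_i\mathbf{Z}^{\pi_i}$ is the mixture distribution with CDF $\sum_i\lambda_iF_{\mathbf{Z}^{\pi_i}}$. $\mathrm{PF}(\Pi)=\{\pi\in\Pi:\nexists\pi'\in\Pi,\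 \mathbf{V}^{\pi'}\succ_p\mathbf{V}^\pi\}$; $\mathrm{CDUS}(\Pi)=\{\pi\in\Pi:\nexists\lambda\in\Delta^{|\Pi|},\ \sum_i\lambda_i\mathbf{Z}^{\pi_i}\succ_d\mathbf{Z}^\pi\}$. *)

theory Defs
  imports "HOL-Probability.Probability"
begin

text \<open>A finite family of n policies is indexed by 0..<n; policy i has return
distribution Z i, a discrete probability distribution on vectors
x :: nat \<Rightarrow> real, of which only the coordinates 0..<d are relevant.\<close>

definition mean_vec :: "(nat \<Rightarrow> real) pmf \<Rightarrow> nat \<Rightarrow> real" where
  "mean_vec Z j = measure_pmf.expectation Z (\<lambda>y. y j)"

definition pareto_dom :: "nat \<Rightarrow> (nat \<Rightarrow> real) \<Rightarrow> (nat \<Rightarrow> real) \<Rightarrow> bool" where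
  "pareto_dom d x y \<longleftrightarrow> (\<forall>i<d. y i \<le> x i) \<and> (\<exists>i<d. y i < x i)"

definition cdf_vec :: "nat \<Rightarrow> (nat \<Rightarrow> real) pmf \<Rightarrow> (nat \<Rightarrow> real) \<Rightarrow> real" where
  "cdf_vec d Z x = measure_pmf.prob Z {y. \<forall>j<d. y j \<le> x j}"

definition marg_cdf :: "(nat \<Rightarrow> real) pmf \<Rightarrow> nat \<Rightarrow> real \<Rightarrow> real" where
  "marg_cdf Z j t = measure_pmf.prob Z {y. y j \<le> t}"

definition prob_simplex :: "nat \<Rightarrow> (nat \<Rightarrow> real) set" where
  "prob_simplex n = {lam. (\<forall>i<n. 0 \<le> lam i) \<and> (\<Sum>i<n. lam i) = 1}"

definition mix_cdf :: "nat \<Rightarrow> nat \<Rightarrow> (nat \<Rightarrow> real) \<Rightarrow> (nat \<Rightarrow> (nat \<Rightarrow> real) pmf) \<Rightarrow> (nat \<Rightarrow> real) \<Rightarrow> real" where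
  "mix_cdf n d lam Z x = (\<Sum>i<n. lam i * cdf_vec d (Z i) x)"

definition mix_marg_cdf :: "nat \<Rightarrow> (nat \<Rightarrow> real) \<Rightarrow> (nat \<Rightarrow> (nat \<Rightarrow> real) pmf) \<Rightarrow> nat \<Rightarrow> real \<Rightarrow> real" where
  "mix_marg_cdf n lam Z j t = (\<Sum>i<n. lam i * marg_cdf (Z i) j t)"

text \<open>X \<succ>_d Y, expressed via the joint CDFs FX, FY and marginal CDFs GX, GY:
  X \<succeq>_FSD Y (FX \<le> FY pointwise) and some marginal j strictly FSD-dominates.\<close>
definition d_dom :: "nat \<Rightarrow> ((nat \<Rightarrow> real) \<Rightarrow> real) \<Rightarrow> (nat \<Rightarrow> real \<Rightarrow> real)
    \<Rightarrow> ((nat \<Rightarrow> real) \<Rightarrow> real) \<Rightarrow> (nat \<Rightarrow> real \<Rightarrow> real) \<Rightarrow> bool" where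
  "d_dom d FX GX FY GY \<longleftrightarrow> (\<forall>x. FX x \<le> FY x) \<and>
     (\<exists>j<d. (\<forall>t. GX j t \<le> GY j t) \<and> (\<exists>t. GX j t < GY j t))"

definition PF :: "nat \<Rightarrow> nat \<Rightarrow> (nat \<Rightarrow> (nat \<Rightarrow> real) pmf) \<Rightarrow> nat set" where
  "PF n d Z = {k. k < n \<and> \<not> (\<exists>k'<n. pareto_dom d (mean_vec (Z k')) (mean_vec (Z k)))}"

definition CDUS :: "nat \<Rightarrow> nat \<Rightarrow> (nat \<Rightarrow> (nat \<Rightarrow> real) pmf) \<Rightarrow> nat set" where
  "CDUS n d Z = {k. k < n \<and> \<not> (\<exists>lam\<in>prob_simplex n.
      d_dom d (mix_cdf n d lam Z) (mix_marg_cdf n lam Z) (cdf_vec d (Z k)) (marg_cdf (Z k)))}"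

end

theory Submission
  imports Defs
begin

definition va :: "nat \<Rightarrow> real" where "va = (\<lambda>j. if j = 0 then 1 else 0)"
definition vb :: "nat \<Rightarrow> real" where "vb = (\<lambda>j. if j = 0 then 0 else 1)"
definition vc :: "nat \<Rightarrow> real" where "vc = (\<lambda>j. if j = 0 then 0 else 1/2)"

definition ZZ :: "nat \<Rightarrow> (nat \<Rightarrow> real) pmf" where
  "ZZ i = (if i = 0 then return_pmf va else if i = 1 then return_pmf vb
           else pmf_of_set {va, vc})"

lemma ac_ne: "va \<noteq> vc"
proof
  assume "va = vc" then have "va 0 = vc 0" by simp
  then show False by (simp add: va_def vc_def)
qed

lemma prob_ac: "measure_pmf.prob (pmf_of_set {va, vc}) A = (indicator A va + indicator A vc) / 2"
  using ac_ne by (subst measure_pmf_of_set) (auto simp: indicator_def)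

lemma int_ac: "measure_pmf.expectation (pmf_of_set {va, vc}) (f :: _ \<Rightarrow> real) = (f va + f vc) / 2"
  using ac_ne by (subst integral_pmf_of_set) auto

lemma mean2: "mean_vec (ZZ 2) 0 = 1/2" "mean_vec (ZZ 2) 1 = 1/4"
  by (simp_all add: mean_vec_def ZZ_def int_ac) (simp_all add: va_def vc_def)

lemma mean01: "mean_vec (ZZ 0) j = va j" "mean_vec (ZZ 1) j = vb j"
  by (simp_all add: mean_vec_def ZZ_def)

lemma inPF: "2 \<in> PF 3 2 ZZ"
proof -
  have "\<not> pareto_dom 2 (mean_vec (ZZ k')) (mean_vec (ZZ 2))" if "k' < 3" for k'
  proof -
    have "k' = 0 \<or> k' = 1 \<or> k' = 2" using that by auto
    then consider "k' = 0" | "k' = 1" | "k' = 2" by blast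
    then show ?thesis
    proof cases
      case 1
      have "\<not> mean_vec (ZZ 2) 1 \<le> mean_vec (ZZ 0) 1" using mean2(2) by (simp add: mean01 va_def)
      then show ?thesis unfolding pareto_dom_def 1 by force
    next
      case 2
      have "\<not> mean_vec (ZZ 2) 0 \<le> mean_vec (ZZ 1) 0" using mean2(1) by (simp add: mean_vec_def ZZ_def vb_def)
      then show ?thesis unfolding pareto_dom_def 2 by force
    next
      case 3 then show ?thesis unfolding pareto_dom_def by auto
    qed
  qed
  then show ?thesis unfolding PF_def by auto
qed

lemma notCDUS: "2 \<notin> CDUS 3 2 ZZ"
proof -
  define lam :: "nat \<Rightarrow> real" where "lam = (\<lambda>i. if i < 2 then 1/2 else 0)"
  have lam: "lam \<in> prob_simplex 3"
    unfolding prob_simplex_def lam_def by (simp add: numeral_3_eq_3 lessThan_Suc)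
  have s3: "\<And>f::nat\<Rightarrow>real. (\<Sum>i<3. f i) = f 0 + f 1 + f 2"
    by (simp add: numeral_3_eq_3 numeral_2_eq_2 lessThan_Suc)
  have F: "mix_cdf 3 2 lam ZZ x \<le> cdf_vec 2 (ZZ 2) x" for x
  proof -
    have "mix_cdf 3 2 lam ZZ x = (indicator {y. \<forall>j<2. y j \<le> x j} va
           + indicator {y. \<forall>j<2. y j \<le> x j} vb) / 2"
      unfolding mix_cdf_def s3 lam_def cdf_vec_def ZZ_def by simp
    moreover have "cdf_vec 2 (ZZ 2) x = (indicator {y. \<forall>j<2. y j \<le> x j} va
           + indicator {y. \<forall>j<2. y j \<le> x j} vc) / 2"
      unfolding cdf_vec_def ZZ_def by (simp add: prob_ac)
    moreover have "indicator {y. \<forall>j<2. y j \<le> x j} vb \<le>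
        (indicator {y. \<forall>j<2. y j \<le> x j} vc :: real)"
    proof (cases "\<forall>j<2. vb j \<le> x j")
      case True
      have "\<forall>j<2. vc j \<le> x j"
      proof (intro allI impI)
        fix j :: nat assume j: "j < 2"
        with True have "vb j \<le> x j" by blast
        then show "vc j \<le> x j" by (cases "j = 0") (auto simp: vb_def vc_def)
      qed
      then show ?thesis by (simp add: indicator_def)
    next
      case False then show ?thesis by (auto simp: indicator_def)
    qed
    ultimately show ?thesis by simp
  qed
  have G: "mix_marg_cdf 3 lam ZZ 1 t \<le> marg_cdf (ZZ 2) 1 t" for t
    unfolding mix_marg_cdf_def s3 lam_def marg_cdf_def ZZ_def
    by (simp add: prob_ac) (simp add: indicator_def va_def vb_def vc_def)
  have G2: "mix_marg_cdf 3 lam ZZ 1 (1/2) < marg_cdf (ZZ 2) 1 (1/2)"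
    unfolding mix_marg_cdf_def s3 lam_def marg_cdf_def ZZ_def
    by (simp add: prob_ac) (simp add: indicator_def va_def vb_def vc_def)
  have "d_dom 2 (mix_cdf 3 2 lam ZZ) (mix_marg_cdf 3 lam ZZ) (cdf_vec 2 (ZZ 2)) (marg_cdf (ZZ 2))"
    unfolding d_dom_def
  proof (intro conjI allI)
    show "\<exists>j<2. (\<forall>t. mix_marg_cdf 3 lam ZZ j t \<le> marg_cdf (ZZ 2) j t) \<and>
            (\<exists>t. mix_marg_cdf 3 lam ZZ j t < marg_cdf (ZZ 2) j t)"
      using G G2 by (intro exI[of _ 1]) auto
  qed (rule F)
  then show ?thesis unfolding CDUS_def using lam by auto
qed

theorem mainTheorem13:
  shows "\<exists>(n::nat) (d::nat) (Z :: nat \<Rightarrow> (nat \<Rightarrow> real) pmf).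
           (\<forall>i<n. \<forall>j<d. integrable (measure_pmf (Z i)) (\<lambda>y. y j)) \<and>
           \<not> (PF n d Z \<subseteq> CDUS n d Z)"
proof (intro exI conjI)
  show "\<forall>i<3. \<forall>j<2. integrable (measure_pmf (ZZ i)) (\<lambda>y. y j)"
    by (auto simp: ZZ_def intro!: integrable_measure_pmf_finite)
  show "\<not> (PF 3 2 ZZ \<subseteq> CDUS 3 2 ZZ)" using inPF notCDUS by blast
qed

end
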